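(* For every integer $k\ge4$ and every prime power $q\ge k^2$, $$\left(1+\frac{q}{q-1}\sum_{i=1}^{k-2}\frac{(q-1)^i}{(q-2)^{\underline{i}}}\right)^{-1}<\min_{0\le j\le k-2}\frac{q^{\underline{j+1}}}{q^{j+1}}\log_q\!\left(\frac{q-j}{k-j-1}\right).$$ That is, the upper bound $\left(1+\frac{q}{q-1}\sum_{i=1}^{k-2}\frac{(q-1)^i}{(q-2)^{\underline{i}}}\right)^{-1}$ on the asymptotic rate of linear $k$-hash codes in $\mathbb{F}_q^n$ is strictly smaller than the Körner–Marton upper bound $\min_{0\le j\le k-2}\frac{q^{\underline{j+1}}}{q^{j+1}}\log_q\frac{q-j}{k-j-1}$ on the asymptotic rate of general $q$-ary $k$-hash codes.
   Context: For positive integers $b\le a$, $a^{\underline{b}}=a(a-1)\cdots(a-b+1)$. A $q$-ary code is a $k$-hash code if for any $k$ distinct codewords there is a coordinate in which they are all pairwise distinct. *)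

theory Defs
  imports Complex_Main "HOL-Number_Theory.Prime_Powers"
begin

definition ffall :: "real \<Rightarrow> nat \<Rightarrow> real" where
  "ffall a b = (\<Prod>i<b. (a - real i))"

end

theory Submission
  imports Defs
begin

lemma prod_le1: "(\<forall>i<(n::nat). 0 \<le> a i \<and> a i \<le> (1::real)) \<Longrightarrow> 0 \<le> (\<Prod>i<n. 1 - a i) \<and> (\<Prod>i<n. 1 - a i) \<le> 1"
  by (induction n) (auto intro: mult_le_one)

lemma weier: "(\<forall>i<(n::nat). 0 \<le> a i \<and> a i \<le> (1::real)) \<Longrightarrow> 1 - (\<Sum>i<n. a i) \<le> (\<Prod>i<n. 1 - a i)"
proof (induction n)
  case 0 then show ?case by simp
next
  case (Suc n)
  have h: "\<forall>i<n. 0 \<le> a i \<and> a i \<le> 1" using Suc.prems by auto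
  have p: "0 \<le> (\<Prod>i<n. 1 - a i)" "(\<Prod>i<n. 1 - a i) \<le> 1" using prod_le1[OF h] by auto
  have an: "0 \<le> a n" "a n \<le> 1" using Suc.prems by auto
  have "(\<Prod>i<Suc n. 1 - a i) = (\<Prod>i<n. 1 - a i) - a n * (\<Prod>i<n. 1 - a i)"
    by (simp add: algebra_simps)
  moreover have "a n * (\<Prod>i<n. 1 - a i) \<le> a n" using p an mult_left_le by blast
  ultimately show ?case using Suc.IH[OF h] by simp
qed

lemma gauss: "2 * (\<Sum>i<n. real i) = real n * (real n - 1)"
  by (induction n) (auto simp: algebra_simps)

theorem theorem4:
  fixes k q :: nat
  assumes "k \<ge> 4" and "primepow q" and "q \<ge> k ^ 2"
  shows "1 / (1 + real q / (real q - 1) *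
              (\<Sum>i=1..k-2. (real q - 1) ^ i / ffall (real q - 2) i))
         < Min ((\<lambda>j. ffall (real q) (j + 1) / real q ^ (j + 1)
                     * log (real q) ((real q - real j) / (real k - real j - 1))) ` {0..k-2})"
proof -
  have k4: "real k \<ge> 4" using assms(1) by simp
  have qk: "real q \<ge> real k ^ 2" using assms(3) by (metis of_nat_le_iff of_nat_power)
  have qk2: "real q \<ge> real k * real k" using qk by (simp add: power2_eq_square)
  have "k \<le> k * k" by (rule le_square)
  then have "k \<le> q" using assms(3) by (simp add: power2_eq_square) (use \<open>k \<le> k * k\<close> in linarith)
  then have kq: "real k \<le> real q" by simp
  have "4 * 4 \<le> k * k" using assms(1) by (intro mult_le_mono) auto
  then have "16 \<le> q" using assms(3) by (simp add: power2_eq_square)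
  then have q16: "real q \<ge> 16" by simp
  define S where "S = (\<Sum>i=1..k-2. (real q - 1) ^ i / ffall (real q - 2) i)"
  have term1: "1 \<le> (real q - 1) ^ i / ffall (real q - 2) i" if i: "i \<in> {1..k-2}" for i
  proof -
    have "ffall (real q - 2) i \<le> (\<Prod>l<i. real q - 1)"
      unfolding ffall_def
    proof (rule prod_mono)
      fix l assume "l \<in> {..<i}"
      then have "l + 3 \<le> k" using i by auto
      then have "real l + 3 \<le> real k" by linarith
      then show "0 \<le> real q - 2 - real l \<and> real q - 2 - real l \<le> real q - 1"
        using kq by linarith
    qed
    moreover have "0 < ffall (real q - 2) i"
      unfolding ffall_def
    proof (rule prod_pos)
      fix l assume "l \<in> {..<i}"
      then have "l + 3 \<le> k" using i by auto
      then have "real l + 3 \<le> real k" by linarith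
      then show "0 < real q - 2 - real l" using kq by linarith
    qed
    ultimately show ?thesis by simp
  qed
  have Sge: "real (k - 2) \<le> S"
  proof -
    have "(\<Sum>i=1..k-2. (1::real)) \<le> S" unfolding S_def by (rule sum_mono) (rule term1)
    then show ?thesis by simp
  qed
  have k2: "real (k - 2) = real k - 2" using assms(1) by simp
  have qq: "real q / (real q - 1) > 1" using q16 by simp
  have "real q / (real q - 1) * S > S" using qq Sge k2 k4
    by (smt (verit) mult_less_cancel_right1)
  then have den: "1 + real q / (real q - 1) * S > real k - 1" using Sge k2 by linarith
  have LHS: "1 / (1 + real q / (real q - 1) * S) < 1 / (real k - 1)"
    using den k4 by (intro divide_strict_left_mono) auto
  have RHS: "1 / (real k - 1) \<le> ffall (real q) (j + 1) / real q ^ (j + 1)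
                     * log (real q) ((real q - real j) / (real k - real j - 1))"
    if j: "j \<in> {0..k-2}" for j
  proof -
    have jk: "real j \<le> real k - 2" using j assms(1) by auto
    define P where "P = ffall (real q) (j + 1) / real q ^ (j + 1)"
    have Peq: "P = (\<Prod>i<j+1. 1 - real i / real q)"
    proof -
      have "P = (\<Prod>i<j+1. real q - real i) / (\<Prod>i<j+1. real q)"
        unfolding P_def ffall_def by simp
      also have "\<dots> = (\<Prod>i<j+1. (real q - real i) / real q)"
        by (simp add: prod_dividef)
      also have "\<dots> = (\<Prod>i<j+1. 1 - real i / real q)"
        using q16 by (intro prod.cong) (auto simp: field_simps)
      finally show ?thesis .
    qed
    have ai: "\<forall>i<j+1. 0 \<le> real i / real q \<and> real i / real q \<le> 1"
      using jk kq by auto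
    have "(\<Sum>i<j+1. real i / real q) = (\<Sum>i<j+1. real i) / real q"
      by (rule sum_divide_distrib[symmetric])
    moreover have "2 * (\<Sum>i<j+1. real i) = (real j + 1) * real j" using gauss[of "j+1"] by simp
    ultimately have T: "(\<Sum>i<j+1. real i / real q) = (real j + 1) * real j / (2 * real q)"
      by (metis mult.commute divide_divide_eq_left nonzero_mult_div_cancel_left zero_neq_numeral)
    have P1: "1 - (real j + 1) * real j / (2 * real q) \<le> P"
      using weier[OF ai] Peq T by simp
    have "(real j + 1) * real j \<le> (real k - 1) * (real k - 2)"
      using jk by (intro mult_mono) auto
    then have "(real j + 1) * real j / (2 * real q) \<le> (real k - 1) * (real k - 2) / (2 * (real k * real k))"
      using qk2 k4 by (intro frac_le) auto
    with P1 have P2: "1 - (real k - 1) * (real k - 2) / (2 * (real k * real k)) \<le> P" by linarith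
    have "2 / (real k - 1) \<le> 1 - (real k - 1) * (real k - 2) / (2 * (real k * real k))"
    proof -
      have "real k ^ 3 - 2 * real k ^ 2 - 5 * real k + 2 \<ge> 0"
      proof -
        have "real k ^ 3 - 2 * real k ^ 2 - 5 * real k + 2 = real k * ((real k - 1) ^ 2 - 6) + 2"
          by (simp add: algebra_simps power2_eq_square power3_eq_cube)
        moreover have "(real k - 1) ^ 2 \<ge> 3 * 3" unfolding power2_eq_square using k4 by (intro mult_mono) auto
        moreover have "real k * ((real k - 1) ^ 2 - 6) \<ge> 0"
          using calculation(2) k4 by (intro mult_nonneg_nonneg) auto
        ultimately show ?thesis by linarith
      qed
      define R where "R = 1 - (real k - 1) * (real k - 2) / (2 * (real k * real k))"
      have kk: "2 * (real k * real k) > 0" using k4 by simp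
      have R2: "R = (2 * (real k * real k) - (real k - 1) * (real k - 2)) / (2 * (real k * real k))"
        unfolding R_def using kk assms(1) by (simp add: diff_divide_distrib)
      have "4 * (real k * real k) \<le> (real k - 1) * (2 * (real k * real k) - (real k - 1) * (real k - 2))"
        using \<open>real k ^ 3 - 2 * real k ^ 2 - 5 * real k + 2 \<ge> 0\<close>
        by (simp add: algebra_simps power2_eq_square power3_eq_cube)
      then have "2 * (2 * (real k * real k)) \<le> (real k - 1) * (2 * (real k * real k) - (real k - 1) * (real k - 2))"
        by simp
      then have "2 \<le> (real k - 1) * (2 * (real k * real k) - (real k - 1) * (real k - 2)) / (2 * (real k * real k))"
        using kk by (simp add: le_divide_eq)
      then have "2 \<le> (real k - 1) * R" unfolding R2 by simp
      then have "2 / (real k - 1) \<le> R" using k4 by (simp add: divide_le_eq mult.commute)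
      then show ?thesis unfolding R_def .
    qed
    with P2 have Pk: "2 / (real k - 1) \<le> P" by linarith
    define x where "x = (real q - real j) / (real k - real j - 1)"
    have "real j * (real k - 1) \<le> real j * real q" using kq by (intro mult_left_mono) auto
    then have "real q * (real k - real j - 1) \<le> (real q - real j) * (real k - 1)"
      by (simp add: algebra_simps)
    then have xge: "real q / (real k - 1) \<le> x"
      unfolding x_def using jk k4
      by (simp add: field_simps)
    have q1: "1 < real q" using q16 by simp
    have "log (real q) ((real k - 1) ^ 2) \<le> log (real q) (real q)"
    proof (rule log_mono)
      have "(real k - 1)^2 = real k * real k - 2 * real k + 1" by (simp add: power2_eq_square algebra_simps)
      then show "(real k - 1)^2 \<le> real q" using qk2 k4 by linarith
    qed (use q1 k4 in auto)
    then have "2 * log (real q) (real k - 1) \<le> 1"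
      using q1 k4 by (simp add: log_nat_power)
    moreover have "log (real q) (real q / (real k - 1)) = 1 - log (real q) (real k - 1)"
      using q1 k4 by (simp add: log_divide)
    moreover have "log (real q) (real q / (real k - 1)) \<le> log (real q) x"
      using xge q1 k4 by (intro log_mono) auto
    ultimately have L: "1/2 \<le> log (real q) x" by linarith
    have "1 / (real k - 1) = (2 / (real k - 1)) * (1/2)" using k4 by (simp add: field_simps)
    also have "\<dots> \<le> P * log (real q) x"
    proof -
      have "0 \<le> 2 / (real k - 1)" using k4 by simp
      then show ?thesis using Pk L by (intro mult_mono) linarith+
    qed
    finally show ?thesis unfolding P_def x_def .
  qed
  show ?thesis
    unfolding S_def[symmetric]
    using LHS RHS assms(1) by (subst Min_gr_iff) force+
qed

end
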